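(* If $\pi\in\mathfrak{S}_m$ is a non-overlapping permutation, then $\pi$ and its reversal $\pi^R=\pi_m\pi_{m-1}\cdots\pi_1$ are super-strongly c-Wilf equivalent.
   Context: The standardization $\operatorname{st}(w)$ of a word of distinct integers replaces its smallest entry by 1, the next smallest by 2, etc. For $\pi\in\mathfrak{S}_m$ and $\sigma\in\mathfrak{S}_n$, $\operatorname{Em}(\pi,\sigma)=\{i\in[n-m+1]:\operatorname{st}(\sigma_i\cdots\sigma_{i+m-1})=\pi\}$. For a set $S$ of positive integers, $a^\pi_{n,S}$ is the number of $\sigma\in\mathfrak{S}_n$ with $\operatorname{Em}(\pi,\sigma)=S$; $\pi,\tau$ are super-strongly c-Wilf equivalent if $a^\pi_{n,S}=a^\tau_{n,S}$ for all $n,S$. The overlap set is $\mathcal{O}_\pi=\{i\in[m-1]:\operatorname{st}(\pi_{i+1}\cdots\pi_m)=\operatorname{st}(\pi_1\cdots\pi_{m-i})\}$; $\pi$ is non-overlapping if $\mathcal{O}_\pi=\{m-1\}$. *)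

theory Defs
  imports Main
begin

definition is_perm :: "nat \<Rightarrow> nat list \<Rightarrow> bool" where
  "is_perm n w \<longleftrightarrow> length w = n \<and> distinct w \<and> set w = {1..n}"

definition perms :: "nat \<Rightarrow> nat list set" where
  "perms n = {w. is_perm n w}"

definition st :: "nat list \<Rightarrow> nat list" where
  "st w = map (\<lambda>x. card {y \<in> set w. y \<le> x}) w"

text \<open>Em(pi, sigma), positions 1-indexed: i in [n-m+1].\<close>
definition Em :: "nat list \<Rightarrow> nat list \<Rightarrow> nat set" where
  "Em p s = {i. 1 \<le> i \<and> i + length p \<le> length s + 1 \<and>
                st (take (length p) (drop (i - 1) s)) = p}"

definition a_count :: "nat list \<Rightarrow> nat \<Rightarrow> nat set \<Rightarrow> nat" where
  "a_count p n S = card {s \<in> perms n. Em p s = S}"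

definition super_strongly_cwilf_equiv :: "nat list \<Rightarrow> nat list \<Rightarrow> bool" where
  "super_strongly_cwilf_equiv p t \<longleftrightarrow>
     (\<forall>n S. (\<forall>i\<in>S. 0 < i) \<longrightarrow> a_count p n S = a_count t n S)"

definition overlap_set :: "nat list \<Rightarrow> nat set" where
  "overlap_set p = {i. 1 \<le> i \<and> i \<le> length p - 1 \<and>
                       st (drop i p) = st (take (length p - i) p)}"

definition non_overlapping :: "nat list \<Rightarrow> bool" where
  "non_overlapping p \<longleftrightarrow> overlap_set p = {length p - 1}"

end

theory Submission
  imports Defs
begin

lemma st_rev: "st (rev w) = rev (st w)"
  by (simp add: st_def rev_map)

lemma length_st[simp]: "length (st w) = length w" by (simp add: st_def)

lemma st_map_mono:
  assumes "strict_mono_on (set w) h"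
  shows "st (map h w) = st w"
proof -
  have inj: "inj_on h (set w)" using assms strict_mono_on_imp_inj_on by blast
  have "card {y \<in> set (map h w). y \<le> h x} = card {y \<in> set w. y \<le> x}" if "x \<in> set w" for x
  proof -
    have "{y \<in> set (map h w). y \<le> h x} = h ` {y \<in> set w. y \<le> x}"
      using strict_mono_on_less_eq[OF assms _ that] by auto
    moreover have "card (h ` {y \<in> set w. y \<le> x}) = card {y \<in> set w. y \<le> x}"
      by (rule card_image) (rule inj_on_subset[OF inj], auto)
    ultimately show ?thesis by simp
  qed
  then show ?thesis by (simp add: st_def)
qed

definition hw :: "nat list \<Rightarrow> nat \<Rightarrow> nat" where
  "hw w x = card {y \<in> set w. y \<le> x}"

lemma st_hw: "st w = map (hw w) w" by (simp add: st_def hw_def)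

lemma hw_mono: "strict_mono_on (set w) (hw w)"
proof (rule strict_mono_onI)
  fix r s :: nat assume "r < s" "s \<in> set w"
  have sub: "{y \<in> set w. y \<le> r} \<subseteq> {y \<in> set w. y \<le> s}" using \<open>r < s\<close> by auto
  have "s \<in> {y \<in> set w. y \<le> s}" "s \<notin> {y \<in> set w. y \<le> r}" using \<open>s \<in> set w\<close> \<open>r < s\<close> by auto
  then have "{y \<in> set w. y \<le> r} \<subset> {y \<in> set w. y \<le> s}" using sub by blast
  then show "hw w r < hw w s" unfolding hw_def by (intro psubset_card_mono) auto
qed

lemma st_drop_st: "st (drop d (st w)) = st (drop d w)"
proof -
  have "st (drop d (st w)) = st (map (hw w) (drop d w))" by (simp add: st_hw drop_map)
  also have "\<dots> = st (drop d w)"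
    by (rule st_map_mono, rule monotone_on_subset[OF hw_mono]) (rule set_drop_subset)
  finally show ?thesis .
qed

lemma st_take_st: "st (take d (st w)) = st (take d w)"
proof -
  have "st (take d (st w)) = st (map (hw w) (take d w))" by (simp add: st_hw take_map)
  also have "\<dots> = st (take d w)"
    by (rule st_map_mono, rule monotone_on_subset[OF hw_mono]) (rule set_take_subset)
  finally show ?thesis .
qed

lemma no_close:
  assumes no: "non_overlapping q" and hi: "i \<in> Em q s" and hj: "j \<in> Em q s"
    and ij: "i < j" and d: "j - i < length q - 1"
  shows False
proof -
  define m where "m = length q"
  define d where "d = j - i"
  define Wi where "Wi = take m (drop (i - 1) s)"
  define Wj where "Wj = take m (drop (j - 1) s)"
  have i1: "1 \<le> i" and jr: "j + m \<le> length s + 1" and sti: "st Wi = q" and stj: "st Wj = q"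
    using hi hj by (auto simp: Em_def Wi_def Wj_def m_def)
  have "drop d Wi = take (m - d) Wj"
  proof -
    have "drop d Wi = take (m - d) (drop d (drop (i - 1) s))" unfolding Wi_def by (simp add: drop_take)
    also have "\<dots> = take (m - d) (drop (j - 1) s)" using i1 ij by (simp add: d_def)
    also have "\<dots> = take (m - d) Wj" unfolding Wj_def by simp
    finally show ?thesis .
  qed
  have "st (drop d q) = st (take (m - d) q)"
  proof -
    have "st (drop d q) = st (drop d Wi)" using sti st_drop_st by metis
    also have "\<dots> = st (take (m - d) Wj)" using \<open>drop d Wi = take (m - d) Wj\<close> by simp
    also have "\<dots> = st (take (m - d) q)" using stj st_take_st by metis
    finally show ?thesis .
  qed
  then have "d \<in> overlap_set q" unfolding overlap_set_def m_def using ij d by (auto simp: d_def)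
  then show False using no d unfolding non_overlapping_def d_def by auto
qed

lemma overlap_rev: "overlap_set (rev q) = overlap_set q"
proof -
  have "st (drop i (rev q)) = st (take (length q - i) (rev q)) \<longleftrightarrow>
        st (drop i q) = st (take (length q - i) q)" if "i \<le> length q - 1" "1 \<le> i" for i
    using that by (auto simp: drop_rev take_rev st_rev)
  then show ?thesis unfolding overlap_set_def by auto
qed

lemma nonov_rev: "non_overlapping q \<Longrightarrow> non_overlapping (rev q)"
  by (simp add: non_overlapping_def overlap_rev)



definition win :: "nat list \<Rightarrow> nat \<Rightarrow> nat \<Rightarrow> nat list" where
  "win s m i = take m (drop (i - 1) s)"

definition pm :: "(nat \<Rightarrow> nat) \<Rightarrow> nat \<Rightarrow> nat list \<Rightarrow> nat list" where
  "pm f n s = map (\<lambda>k. s ! f k) [0..<n]"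

definition rfl :: "nat \<Rightarrow> nat \<Rightarrow> nat \<Rightarrow> nat" where
  "rfl lo hi k = (if lo \<le> k \<and> k \<le> hi then lo + hi - k else k)"

lemma finite_perms: "finite (perms n)"
proof -
  have "perms n \<subseteq> {w. set w \<subseteq> {1..n} \<and> length w = n}"
    by (auto simp: perms_def is_perm_def)
  moreover have "finite {w. set w \<subseteq> {1..n} \<and> length w = n}"
    by (rule finite_lists_length_eq) auto
  ultimately show ?thesis by (rule finite_subset)
qed

lemma Em_iff: "length s = n \<Longrightarrow>
  j \<in> Em q s \<longleftrightarrow> 1 \<le> j \<and> j + length q \<le> n + 1 \<and> st (win s (length q) j) = q"
  by (auto simp: Em_def win_def)

lemma pm_perm:
  assumes s: "s \<in> perms n" and fr: "\<forall>k<n. f k < n" and ff: "\<forall>k<n. f (f k) = k"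
  shows "pm f n s \<in> perms n"
proof -
  have len: "length s = n" and ds: "distinct s" and ss: "set s = {1..n}"
    using s by (auto simp: perms_def is_perm_def)
  have "inj_on (\<lambda>k. s ! f k) {0..<n}"
  proof (rule inj_onI)
    fix x y assume "x \<in> {0..<n}" "y \<in> {0..<n}" "s ! f x = s ! f y"
    then have "f x = f y" using nth_eq_iff_index_eq[OF ds] fr len by auto
    then show "x = y" using ff \<open>x \<in> {0..<n}\<close> \<open>y \<in> {0..<n}\<close> by (metis atLeastLessThan_iff)
  qed
  then have d: "distinct (pm f n s)" by (simp add: pm_def distinct_map)
  have "set (pm f n s) = set s"
  proof
    show "set (pm f n s) \<subseteq> set s" using fr len by (auto simp: pm_def)
    show "set s \<subseteq> set (pm f n s)"
    proof
      fix x assume "x \<in> set s"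
      then obtain k where k: "k < n" "x = s ! k" using len by (auto simp: in_set_conv_nth)
      then have "x = s ! f (f k)" using ff by simp
      then show "x \<in> set (pm f n s)" using fr k by (auto simp: pm_def)
    qed
  qed
  then show ?thesis using d ss by (auto simp: perms_def is_perm_def pm_def)
qed

lemma pm_pm:
  assumes "length s = n" and fr: "\<forall>k<n. f k < n" and ff: "\<forall>k<n. f (f k) = k"
  shows "pm f n (pm f n s) = s"
  using assms by (intro nth_equalityI) (auto simp: pm_def)

lemma nth_win: "t < m \<Longrightarrow> i - 1 + m \<le> length s \<Longrightarrow> win s m i ! t = s ! (i - 1 + t)"
  by (simp add: win_def)

lemma length_win: "i - 1 + m \<le> length s \<Longrightarrow> length (win s m i) = m"
  by (simp add: win_def)

lemma length_pm[simp]: "length (pm f n s) = n" by (simp add: pm_def)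

lemma nth_pm: "k < n \<Longrightarrow> pm f n s ! k = s ! f k" by (simp add: pm_def)

lemma rfl_props:
  assumes "hi < n"
  shows "\<forall>k<n. rfl lo hi k < n" "\<forall>k<n. rfl lo hi (rfl lo hi k) = k"
  using assms by (auto simp: rfl_def)



lemma core1:
  assumes a1: "1 \<le> a" and rk: "r \<le> k" and rng: "a + k*L + m \<le> n + 1" and len: "length s = n"
    and mL: "m = L + 1"
  shows "win (pm (rfl (a-1) (a-1+(k+1)*L)) n s) m (a + r*L) = rev (win s m (a + (k-r)*L))"
proof -
  obtain x y where x: "x = r*L" and y: "y = (k-r)*L" by blast
  have kL: "k*L = x + y" using x y rk by (simp add: add_mult_distrib[symmetric])
  have k1L: "(k+1)*L = x + y + L" using kL by simp
  have l1: "a + r*L - 1 + m \<le> length s" using rng len kL x a1 by linarith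
  have l2: "a + (k-r)*L - 1 + m \<le> length s" using rng len kL y a1 by linarith
  show ?thesis
  proof (rule nth_equalityI)
    show "length (win (pm (rfl (a-1) (a-1+(k+1)*L)) n s) m (a + r*L)) = length (rev (win s m (a + (k-r)*L)))"
      using l1 l2 len by (simp add: length_win)
  next
    fix t assume "t < length (win (pm (rfl (a-1) (a-1+(k+1)*L)) n s) m (a + r*L))"
    then have t: "t < m" using l1 len by (simp add: length_win)
    have "win (pm (rfl (a-1) (a-1+(k+1)*L)) n s) m (a + r*L) ! t
        = s ! rfl (a-1) (a-1+(k+1)*L) (a + r*L - 1 + t)"
      using t l1 len by (simp add: nth_win nth_pm)
    also have "rfl (a-1) (a-1+(k+1)*L) (a + r*L - 1 + t) = a + y - 1 + (m - 1 - t)"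
      unfolding rfl_def k1L using t a1 mL x by auto
    also have "s ! (a + y - 1 + (m - 1 - t)) = rev (win s m (a + (k-r)*L)) ! t"
      using t l2 y by (simp add: rev_nth length_win nth_win)
    finally show "win (pm (rfl (a-1) (a-1+(k+1)*L)) n s) m (a + r*L) ! t = rev (win s m (a + (k-r)*L)) ! t" .
  qed
qed

lemma core2:
  assumes a1: "1 \<le> a" and j1: "1 \<le> j" and rng: "j + m \<le> n + 1" and len: "length s = n"
    and mL: "m = L + 1" and out: "j + L < a \<or> a + (k+1)*L < j"
  shows "win (pm (rfl (a-1) (a-1+(k+1)*L)) n s) m j = win s m j"
proof (rule nth_equalityI)
  show "length (win (pm (rfl (a-1) (a-1+(k+1)*L)) n s) m j) = length (win s m j)"
    using rng len j1 by (simp add: length_win)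
next
  fix t assume "t < length (win (pm (rfl (a-1) (a-1+(k+1)*L)) n s) m j)"
  then have t: "t < m" using rng len j1 by (simp add: length_win)
  have "rfl (a-1) (a-1+(k+1)*L) (j - 1 + t) = j - 1 + t"
    unfolding rfl_def using t out mL j1 a1 by auto
  then show "win (pm (rfl (a-1) (a-1+(k+1)*L)) n s) m j ! t = win s m j ! t"
    using t rng len j1 by (simp add: nth_win nth_pm)
qed

lemma outside:
  fixes T :: "nat set" and L a j k :: nat
  assumes valid: "\<forall>i\<in>T. \<forall>j\<in>T. i < j \<longrightarrow> L \<le> j - i" and L1: "1 \<le> L"
    and ch: "\<forall>r\<le>k. a + r*L \<in> T" and lo: "\<forall>j\<in>T. j + L \<noteq> a" and hi: "a + (k+1)*L \<notin> T"
    and jT: "j \<in> T" and jC: "\<forall>r\<le>k. j \<noteq> a + r*L"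
  shows "j + L < a \<or> a + (k+1)*L < j"
proof (rule ccontr)
  assume "\<not> (j + L < a \<or> a + (k+1)*L < j)"
  then have j1: "a \<le> j + L" and j2: "j \<le> a + (k+1)*L" by (simp_all add: not_less)
  have aT: "a \<in> T" using ch by (metis mult_0 add_0_right le0)
  show False
  proof (cases "j < a")
    case True
    then have "j + L \<noteq> a" using lo jT by auto
    then have "a - j < L" using j1 True by linarith
    then show False using valid jT aT True by fastforce
  next
    case False
    define q where "q = (j - a) div L"
    define \<rho> where "\<rho> = (j - a) mod L"
    have jq: "j = a + q*L + \<rho>" using False unfolding q_def \<rho>_def
      by (metis add.assoc le_add_diff_inverse div_mult_mod_eq not_le)
    have rL: "\<rho> < L" using L1 unfolding \<rho>_def by simp
    show False
    proof (cases "\<rho> = 0")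
      case True
      then have jq': "j = a + q*L" using jq by simp
      have "q \<le> k + 1"
      proof (rule ccontr)
        assume "\<not> q \<le> k + 1"
        then have "(k+2)*L \<le> q*L" by (intro mult_right_mono) auto
        then show False using j2 jq' L1 by simp
      qed
      show False
      proof (cases "q = k + 1")
        case True then show False using hi jT jq' by simp
      next
        case False then have "q \<le> k" using \<open>q \<le> k + 1\<close> by simp
        then show False using jC jq' by blast
      qed
    next
      case False
      have "q \<le> k"
      proof (rule ccontr)
        assume "\<not> q \<le> k"
        then have "(k+1)*L \<le> q*L" by (intro mult_right_mono) auto
        then show False using j2 jq False by simp
      qed
      then have "a + q*L \<in> T" using ch by simp
      moreover have "a + q*L < j" "j - (a + q*L) < L" using jq False rL by auto
      ultimately show False using valid jT by fastforce
    qed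
  qed
qed



definition X :: "nat \<Rightarrow> nat set \<Rightarrow> nat set \<Rightarrow> nat list \<Rightarrow> nat list set" where
  "X n T R p = {s \<in> perms n. \<forall>j\<in>T. j \<in> Em (if j \<in> R then rev p else p) s}"

lemma perms_len: "s \<in> perms n \<Longrightarrow> length s = n" by (simp add: perms_def is_perm_def)

lemma flip:
  fixes T R :: "nat set" and L a k n :: nat and p :: "nat list"
  assumes mL: "length p = L + 1" and L1: "1 \<le> L"
    and valid: "\<forall>i\<in>T. \<forall>j\<in>T. i < j \<longrightarrow> L \<le> j - i"
    and range: "\<forall>j\<in>T. 1 \<le> j \<and> j + length p \<le> n + 1"
    and a1: "1 \<le> a" and ch: "\<forall>r\<le>k. a + r*L \<in> T" and chR: "\<forall>r\<le>k. a + r*L \<notin> R"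
    and lo: "\<forall>j\<in>T. j + L \<noteq> a" and hi: "a + (k+1)*L \<notin> T"
  shows "card (X n T R p) = card (X n T (R \<union> {a + r*L | r. r \<le> k}) p)"
proof -
  define f where "f = rfl (a-1) (a-1+(k+1)*L)"
  define C where "C = {a + r*L | r. r \<le> k}"
  define m where "m = length p"
  have akT: "a + k*L \<in> T" using ch by simp
  then have "a + k*L + m \<le> n + 1" using range m_def by auto
  then have seg: "a-1+(k+1)*L < n" using mL m_def a1 by simp
  note fprops = rfl_props[OF seg, of "a-1", folded f_def]
  have CT: "C \<subseteq> T" using ch C_def by auto
  have inC: "j \<in> C \<Longrightarrow> \<exists>r\<le>k. j = a + r*L" for j using C_def by auto
  have key1: "st (win (pm f n s) m (a + r*L)) = rev (st (win s m (a + (k-r)*L)))"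
    if "length s = n" "r \<le> k" for s r
    using core1[OF a1 that(2) \<open>a + k*L + m \<le> n + 1\<close> that(1)] mL m_def f_def
    by (simp add: st_rev)
  have key2: "win (pm f n s) m j = win s m j" if "length s = n" "j \<in> T" "j \<notin> C" for s j
  proof -
    have "\<forall>r\<le>k. j \<noteq> a + r*L" using that C_def by auto
    then have "j + L < a \<or> a + (k+1)*L < j"
      using outside[OF valid L1 ch lo hi \<open>j \<in> T\<close>] by blast
    then show ?thesis unfolding f_def
      by (intro core2[OF a1]) (use range that mL m_def in auto)
  qed
  have k'C: "a + (k-r)*L \<in> C" for r using C_def by auto
  have emiff: "j \<in> Em q s \<longleftrightarrow> st (win s m j) = q"
    if "length s = n" "j \<in> T" "length q = m" for j q s
    using Em_iff[OF that(1)] range that m_def by auto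
  have dir: "pm f n s \<in> X n T R2 p"
    if s: "s \<in> X n T R1 p" and R12: "\<forall>j\<in>T. j \<notin> C \<longrightarrow> (j \<in> R1 \<longleftrightarrow> j \<in> R2)"
      and C1: "\<forall>j\<in>C. j \<in> R1 \<longleftrightarrow> \<not> j \<in> R2" and C2: "\<forall>j\<in>C. \<forall>i\<in>C. j \<in> R1 \<longleftrightarrow> i \<in> R1"
    for s R1 R2
  proof -
    have sp: "s \<in> perms n" and sw: "\<forall>j\<in>T. j \<in> Em (if j \<in> R1 then rev p else p) s"
      using s by (auto simp: X_def)
    have ls: "length s = n" using sp perms_len by blast
    have "pm f n s \<in> perms n" using pm_perm[OF sp] fprops by blast
    moreover have "j \<in> Em (if j \<in> R2 then rev p else p) (pm f n s)" if jT: "j \<in> T" for j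
    proof (cases "j \<in> C")
      case True
      then obtain r where r: "r \<le> k" "j = a + r*L" using inC by blast
      have j'C: "a + (k-r)*L \<in> C" by (rule k'C)
      then have j'T: "a + (k-r)*L \<in> T" using CT by blast
      have "a + (k-r)*L \<in> Em (if a + (k-r)*L \<in> R1 then rev p else p) s"
        using sw j'T by blast
      then have "st (win s m (a + (k-r)*L)) = (if a + (k-r)*L \<in> R1 then rev p else p)"
        using emiff[OF ls j'T] m_def by (cases "a + (k-r)*L \<in> R1") auto
      moreover have "a + (k-r)*L \<in> R1 \<longleftrightarrow> j \<in> R1" using C2 True j'C by blast
      ultimately have "st (win (pm f n s) m j) = rev (if j \<in> R1 then rev p else p)"
        using key1[OF ls r(1)] r(2) by simp
      also have "\<dots> = (if j \<in> R2 then rev p else p)" using C1 True by auto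
      finally show ?thesis using emiff[OF _ jT] m_def by simp
    next
      case False
      have "j \<in> Em (if j \<in> R1 then rev p else p) s"
        using sw jT by blast
      then have "st (win s m j) = (if j \<in> R1 then rev p else p)"
        using emiff[OF ls jT] m_def by (cases "j \<in> R1") auto
      then have "st (win (pm f n s) m j) = (if j \<in> R2 then rev p else p)"
        using key2[OF ls jT False] R12 jT False by simp
      then show ?thesis using emiff[OF _ jT] m_def by simp
    qed
    ultimately show ?thesis unfolding X_def by blast
  qed
  have chR': "\<forall>j\<in>C. j \<notin> R" using chR C_def by auto
  have A: "pm f n ` X n T R p \<subseteq> X n T (R \<union> C) p"
  proof (rule image_subsetI)
    fix s assume "s \<in> X n T R p"
    then show "pm f n s \<in> X n T (R \<union> C) p"
      by (rule dir) (use chR' in blast)+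
  qed
  have B: "pm f n ` X n T (R \<union> C) p \<subseteq> X n T R p"
  proof (rule image_subsetI)
    fix s assume "s \<in> X n T (R \<union> C) p"
    then show "pm f n s \<in> X n T R p"
      by (rule dir) (use chR' in blast)+
  qed
  have inv: "pm f n (pm f n s) = s" if "s \<in> X n T R' p" for s R'
    using pm_pm[OF _ fprops] that perms_len by (auto simp: X_def)
  have "bij_betw (pm f n) (X n T R p) (X n T (R \<union> C) p)"
    by (rule bij_betw_byWitness[where f'="pm f n"]) (use A B inv in blast)+
  then show ?thesis using bij_betw_same_card C_def by blast
qed



lemma all_closed:
  fixes T :: "nat set" and L n :: nat and p :: "nat list"
  assumes mL: "length p = L + 1" and L1: "1 \<le> L"
    and valid: "\<forall>i\<in>T. \<forall>j\<in>T. i < j \<longrightarrow> L \<le> j - i"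
    and range: "\<forall>j\<in>T. 1 \<le> j \<and> j + length p \<le> n + 1"
    and fin: "finite T"
  shows "R \<subseteq> T \<Longrightarrow> (\<forall>j\<in>R. \<forall>i\<in>T. i = j + L \<or> j = i + L \<longrightarrow> i \<in> R)
         \<Longrightarrow> card (X n T R p) = card (X n T T p)"
proof (induction "card (T - R)" arbitrary: R rule: less_induct)
  case less
  note RT = less.prems(1) and cl = less.prems(2)
  show ?case
  proof (cases "R = T")
    case True then show ?thesis by simp
  next
    case False
    then obtain i where iT: "i \<in> T" and iR: "i \<notin> R" using RT by blast
    define Q where "Q = T - R"
    have iQ: "i \<in> Q" using iT iR Q_def by simp
    have i1: "1 \<le> i" using range iT by auto
    define D where "D = {d. d*L < i \<and> (\<forall>r\<le>d. i - r*L \<in> Q)}"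
    have "D \<subseteq> {..<i}"
    proof
      fix d assume "d \<in> D"
      then have "d*L < i" by (simp add: D_def)
      moreover have "d \<le> d*L" using L1 by simp
      ultimately have "d < i" by linarith
      then show "d \<in> {..<i}" by simp
    qed
    then have finD: "finite D" by (rule finite_subset) simp
    have "0 \<in> D" using iQ i1 by (simp add: D_def)
    define d0 where "d0 = Max D"
    have d0D: "d0 \<in> D" using finD \<open>0 \<in> D\<close> d0_def Max_in by blast
    have d0max: "d \<in> D \<Longrightarrow> d \<le> d0" for d using finD d0_def by simp
    have d0i: "d0*L < i" and d0Q: "\<forall>r\<le>d0. i - r*L \<in> Q" using d0D by (auto simp: D_def)
    define E where "E = {e. \<forall>r\<le>e. i + r*L \<in> Q}"
    have "E \<subseteq> {..Max T}"
    proof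
      fix e assume "e \<in> E"
      then have "i + e*L \<in> T" by (simp add: E_def Q_def)
      then have "i + e*L \<le> Max T" using fin by simp
      moreover have "e \<le> e*L" using L1 by simp
      ultimately have "e \<le> Max T" by linarith
      then show "e \<in> {..Max T}" by simp
    qed
    then have finE: "finite E" by (rule finite_subset) simp
    have "0 \<in> E" using iQ by (simp add: E_def)
    define e0 where "e0 = Max E"
    have e0E: "e0 \<in> E" using finE \<open>0 \<in> E\<close> e0_def Max_in by blast
    have e0max: "e \<in> E \<Longrightarrow> e \<le> e0" for e using finE e0_def by simp
    define a where "a = i - d0*L"
    define k where "k = d0 + e0"
    have a1: "1 \<le> a" using d0i a_def by simp
    have chQ: "\<forall>r\<le>k. a + r*L \<in> Q"
    proof (intro allI impI)
      fix r assume "r \<le> k"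
      show "a + r*L \<in> Q"
      proof (cases "r \<le> d0")
        case True
        have "(d0 - r)*L = d0*L - r*L" by (simp add: diff_mult_distrib)
        moreover have "r*L \<le> d0*L" using True by simp
        ultimately have "a + r*L = i - (d0 - r)*L" using d0i a_def by simp
        then show ?thesis using d0Q by simp
      next
        case False
        have "(r - d0)*L = r*L - d0*L" by (simp add: diff_mult_distrib)
        moreover have "d0*L \<le> r*L" using False by simp
        ultimately have "a + r*L = i + (r - d0)*L" using d0i a_def by simp
        moreover have "r - d0 \<le> e0" using \<open>r \<le> k\<close> k_def by simp
        ultimately show ?thesis using e0E by (simp add: E_def)
      qed
    qed
    have loQ: "\<forall>j\<in>Q. j + L \<noteq> a"
    proof (intro ballI notI)
      fix j assume jQ: "j \<in> Q" and ja: "j + L = a"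
      have "j \<ge> 1" using jQ range Q_def by auto
      then have "(d0+1)*L < i" using ja a_def d0i by simp
      moreover have "\<forall>r\<le>d0+1. i - r*L \<in> Q"
      proof (intro allI impI)
        fix r assume "r \<le> d0 + 1"
        show "i - r*L \<in> Q"
        proof (cases "r \<le> d0")
          case True then show ?thesis using d0Q by simp
        next
          case False
          then have "r = d0 + 1" using \<open>r \<le> d0 + 1\<close> by simp
          then have "i - r*L = j" using ja a_def d0i by simp
          then show ?thesis using jQ by simp
        qed
      qed
      ultimately have "d0 + 1 \<in> D" by (simp add: D_def)
      then show False using d0max by fastforce
    qed
    have hiQ: "a + (k+1)*L \<notin> Q"
    proof
      assume h: "a + (k+1)*L \<in> Q"
      have eq: "a + (k+1)*L = i + (e0+1)*L" using d0i a_def k_def by (simp add: algebra_simps)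
      have h': "i + (e0+1)*L \<in> Q" using h unfolding eq .
      have "\<forall>r\<le>e0+1. i + r*L \<in> Q"
      proof (intro allI impI)
        fix r assume "r \<le> e0 + 1"
        show "i + r*L \<in> Q"
        proof (cases "r = e0 + 1")
          case True then show ?thesis using h' by simp
        next
          case False then have "r \<le> e0" using \<open>r \<le> e0 + 1\<close> by simp
          then show ?thesis using e0E unfolding E_def by blast
        qed
      qed
      then have "e0 + 1 \<in> E" by (simp add: E_def)
      then show False using e0max by fastforce
    qed
    define C where "C = {a + r*L | r. r \<le> k}"
    have CQ: "C \<subseteq> Q" using chQ C_def by auto
    have clsym: "j \<in> R" if "i' \<in> R" "j \<in> T" "i' = j + L \<or> j = i' + L" for i' j
      using cl that by blast
    have lo: "\<forall>j\<in>T. j + L \<noteq> a"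
    proof (intro ballI notI)
      fix j assume "j \<in> T" "j + L = a"
      show False
      proof (cases "j \<in> R")
        case True
        then have "a \<in> R" using cl chQ Q_def \<open>j + L = a\<close> by (metis DiffD1 add_0_right le0 mult_0)
        then show False using chQ Q_def by (metis DiffD2 add_0_right le0 mult_0)
      next
        case False then show False using loQ \<open>j \<in> T\<close> \<open>j + L = a\<close> Q_def by blast
      qed
    qed
    have hi: "a + (k+1)*L \<notin> T"
    proof
      assume h: "a + (k+1)*L \<in> T"
      then have hR: "a + (k+1)*L \<in> R" using hiQ Q_def by blast
      moreover have akT: "a + k*L \<in> T" using chQ Q_def by blast
      moreover have "a + (k+1)*L = (a + k*L) + L" by simp
      ultimately have "a + k*L \<in> R" using cl by blast
      then show False using chQ Q_def by blast
    qed
    have ch: "\<forall>r\<le>k. a + r*L \<in> T" and chR: "\<forall>r\<le>k. a + r*L \<notin> R" using chQ Q_def by auto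
    have eq1: "card (X n T R p) = card (X n T (R \<union> C) p)"
      unfolding C_def by (rule flip[OF mL L1 valid range a1 ch chR lo hi])
    have iC: "i \<in> C"
    proof -
      have "i = a + d0*L" using a_def d0i by simp
      then show ?thesis using C_def k_def by auto
    qed
    have RC: "R \<union> C \<subseteq> T" using RT CQ Q_def by blast
    have clRC: "\<forall>j\<in>R \<union> C. \<forall>i'\<in>T. i' = j + L \<or> j = i' + L \<longrightarrow> i' \<in> R \<union> C"
    proof (intro ballI impI)
      fix j i' assume jRC: "j \<in> R \<union> C" and i'T: "i' \<in> T" and rel: "i' = j + L \<or> j = i' + L"
      show "i' \<in> R \<union> C"
      proof (cases "j \<in> R")
        case True then show ?thesis using cl i'T rel by blast
      next
        case False
        then have jC: "j \<in> C" using jRC by blast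
        then obtain r where r: "r \<le> k" "j = a + r*L" using C_def by blast
        show ?thesis
        proof (cases "i' \<in> R")
          case True
          then have "j \<in> R" using clsym[OF True] jC CQ Q_def rel by blast
          then show ?thesis using False by blast
        next
          case i'nR: False
          then have i'Q: "i' \<in> Q" using i'T Q_def by blast
          show ?thesis
          proof (cases "i' = j + L")
            case True
            show ?thesis
            proof (cases "r = k")
              case True
              then have "i' = a + (k+1)*L" using r \<open>i' = j + L\<close> by simp
              then show ?thesis using hiQ i'Q by blast
            next
              case False
              then have "r + 1 \<le> k" using r by simp
              moreover have "i' = a + (r+1)*L" using r \<open>i' = j + L\<close> by simp
              ultimately show ?thesis using C_def by blast
            qed
          next
            case False
            then have jL: "j = i' + L" using rel by blast
            show ?thesis
            proof (cases r)
              case 0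
              then have "i' + L = a" using jL r by simp
              then show ?thesis using loQ i'Q by blast
            next
              case (Suc r')
              then have "i' = a + r'*L" using jL r by simp
              moreover have "r' \<le> k" using Suc r by simp
              ultimately show ?thesis using C_def by blast
            qed
          qed
        qed
      qed
    qed
    have "card (T - (R \<union> C)) < card (T - R)"
    proof (rule psubset_card_mono)
      show "finite (T - R)" using fin by simp
      show "T - (R \<union> C) \<subset> T - R" using iC iT iR by blast
    qed
    then have "card (X n T (R \<union> C) p) = card (X n T T p)"
      using less.hyps RC clRC by blast
    then show ?thesis using eq1 by simp
  qed
qed



lemma nonov_len: "non_overlapping p \<Longrightarrow> 2 \<le> length p"
proof -
  assume "non_overlapping p"
  then have "length p - 1 \<in> overlap_set p" by (simp add: non_overlapping_def)
  then have "1 \<le> length p - 1" by (simp add: overlap_set_def)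
  then show ?thesis by simp
qed

lemma b_eq:
  fixes p :: "nat list" and T :: "nat set" and n :: nat
  assumes np: "non_overlapping p"
  shows "card {s \<in> perms n. T \<subseteq> Em p s} = card {s \<in> perms n. T \<subseteq> Em (rev p) s}"
proof -
  define L where "L = length p - 1"
  have m2: "2 \<le> length p" using nonov_len[OF np] .
  have mL: "length p = L + 1" and L1: "1 \<le> L" using m2 L_def by auto
  have npr: "non_overlapping (rev p)" using nonov_rev[OF np] .
  show ?thesis
  proof (cases "\<forall>j\<in>T. 1 \<le> j \<and> j + length p \<le> n + 1")
    case False
    then obtain j where jT: "j \<in> T" and jr: "\<not> (1 \<le> j \<and> j + length p \<le> n + 1)" by blast
    have nq: "\<not> T \<subseteq> Em q s" if "s \<in> perms n" "length q = length p" for s q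
      using Em_iff[OF perms_len[OF that(1)], of j q] jT jr that(2) by auto
    have e1: "{s \<in> perms n. T \<subseteq> Em p s} = {}" using nq[of _ p] by blast
    have e2: "{s \<in> perms n. T \<subseteq> Em (rev p) s} = {}" using nq[of _ "rev p"] by simp
    show ?thesis unfolding e1 e2 ..
  next
    case range: True
    show ?thesis
    proof (cases "\<exists>i\<in>T. \<exists>j\<in>T. i < j \<and> j - i < L")
      case True
      then obtain i j where ij: "i \<in> T" "j \<in> T" "i < j" "j - i < L" by blast
      have e1: "{s \<in> perms n. T \<subseteq> Em p s} = {}"
      proof (rule equals0I)
        fix s assume "s \<in> {s \<in> perms n. T \<subseteq> Em p s}"
        then have "i \<in> Em p s" "j \<in> Em p s" using ij by auto
        then show False using no_close[OF np, of i s j] ij L_def by simp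
      qed
      have e2: "{s \<in> perms n. T \<subseteq> Em (rev p) s} = {}"
      proof (rule equals0I)
        fix s assume "s \<in> {s \<in> perms n. T \<subseteq> Em (rev p) s}"
        then have "i \<in> Em (rev p) s" "j \<in> Em (rev p) s" using ij by auto
        then show False using no_close[OF npr, of i s j] ij L_def by simp
      qed
      show ?thesis unfolding e1 e2 ..
    next
      case False
      then have valid: "\<forall>i\<in>T. \<forall>j\<in>T. i < j \<longrightarrow> L \<le> j - i" by (meson not_less)
      have "T \<subseteq> {1..n}"
      proof
        fix x assume "x \<in> T"
        then have "1 \<le> x" "x + length p \<le> n + 1" using range by auto
        then show "x \<in> {1..n}" using m2 by simp
      qed
      then have fin: "finite T" by (rule finite_subset) simp
      have "card (X n T {} p) = card (X n T T p)"
        by (rule all_closed[OF mL L1 valid range fin]) auto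
      moreover have "X n T {} p = {s \<in> perms n. T \<subseteq> Em p s}" by (auto simp: X_def)
      moreover have "X n T T p = {s \<in> perms n. T \<subseteq> Em (rev p) s}" by (auto simp: X_def)
      ultimately show ?thesis by simp
    qed
  qed
qed

lemma Em_U: "s \<in> perms n \<Longrightarrow> Em q s \<subseteq> {1..Suc n}"
  using perms_len by (force simp: Em_def)

lemma b_sum:
  assumes TU: "T \<subseteq> {1..Suc n}"
  shows "card {s \<in> perms n. T \<subseteq> Em q s} = (\<Sum>S\<in>{S. S \<subseteq> {1..Suc n} \<and> T \<subseteq> S}. a_count q n S)"
proof -
  define I where "I = {S. S \<subseteq> {1..Suc n} \<and> T \<subseteq> S}"
  have finI: "finite I" unfolding I_def by (rule finite_subset[of _ "Pow {1..Suc n}"]) auto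
  define A where "A = (\<lambda>S. {s \<in> perms n. Em q s = S})"
  have eqU: "{s \<in> perms n. T \<subseteq> Em q s} = (\<Union>S\<in>I. A S)"
  proof
    show "{s \<in> perms n. T \<subseteq> Em q s} \<subseteq> (\<Union>S\<in>I. A S)"
    proof
      fix s assume s: "s \<in> {s \<in> perms n. T \<subseteq> Em q s}"
      then have "Em q s \<in> I" using Em_U unfolding I_def by blast
      moreover have "s \<in> A (Em q s)" using s unfolding A_def by blast
      ultimately show "s \<in> (\<Union>S\<in>I. A S)" by blast
    qed
    show "(\<Union>S\<in>I. A S) \<subseteq> {s \<in> perms n. T \<subseteq> Em q s}"
      unfolding A_def I_def by blast
  qed
  have finA: "\<forall>S\<in>I. finite (A S)" unfolding A_def using finite_perms by simp
  have disj: "\<forall>S\<in>I. \<forall>S'\<in>I. S \<noteq> S' \<longrightarrow> A S \<inter> A S' = {}" unfolding A_def by blast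
  have "card {s \<in> perms n. T \<subseteq> Em q s} = (\<Sum>S\<in>I. card (A S))"
    unfolding eqU by (rule card_UN_disjoint[OF finI finA disj])
  then show ?thesis by (simp add: a_count_def I_def A_def)
qed

lemma a_eq:
  assumes hb: "\<forall>T. card {s \<in> perms n. T \<subseteq> Em p s} = card {s \<in> perms n. T \<subseteq> Em q s}"
  shows "S \<subseteq> {1..Suc n} \<Longrightarrow> a_count p n S = a_count q n S"
proof (induction "card ({1..Suc n} - S)" arbitrary: S rule: less_induct)
  case less
  define U where "U = {1..Suc n}"
  have SU: "S \<subseteq> U" using less.prems U_def by simp
  define I where "I = {S'. S' \<subseteq> U \<and> S \<subset> S'}"
  have finI: "finite I" unfolding I_def by (rule finite_subset[of _ "Pow U"]) (auto simp: U_def)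
  have split: "{S'. S' \<subseteq> U \<and> S \<subseteq> S'} = insert S I" using SU I_def by auto
  have SI: "S \<notin> I" using I_def by auto
  have "(\<Sum>S'\<in>I. a_count p n S') = (\<Sum>S'\<in>I. a_count q n S')"
  proof (rule sum.cong)
    fix S' assume "S' \<in> I"
    then have "S' \<subseteq> U" "S \<subset> S'" using I_def by auto
    have "card (U - S') < card (U - S)"
      by (rule psubset_card_mono) (use \<open>S' \<subseteq> U\<close> \<open>S \<subset> S'\<close> SU U_def in auto)
    then show "a_count p n S' = a_count q n S'"
      using less.hyps \<open>S' \<subseteq> U\<close> U_def by blast
  qed simp
  moreover have "card {s \<in> perms n. S \<subseteq> Em p s} = a_count p n S + (\<Sum>S'\<in>I. a_count p n S')"
    using b_sum[OF less.prems, of p] split SI finI U_def by simp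
  moreover have "card {s \<in> perms n. S \<subseteq> Em q s} = a_count q n S + (\<Sum>S'\<in>I. a_count q n S')"
    using b_sum[OF less.prems, of q] split SI finI U_def by simp
  ultimately show ?case using hb by simp
qed

theorem corollary5p5:
  fixes p :: "nat list" and m :: nat
  assumes "is_perm m p" and "non_overlapping p"
  shows "super_strongly_cwilf_equiv p (rev p)"
  unfolding super_strongly_cwilf_equiv_def
proof (intro allI impI)
  fix n S
  show "a_count p n S = a_count (rev p) n S"
  proof (cases "S \<subseteq> {1..Suc n}")
    case True
    show ?thesis
      by (rule a_eq[OF _ True]) (use b_eq[OF assms(2)] in blast)
  next
    case False
    have e: "{s \<in> perms n. Em q s = S} = {}" for q using Em_U False by blast
    show ?thesis unfolding a_count_def e[of p] e[of "rev p"] ..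
  qed
qed


end
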